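(* Let $(\mathfrak g,J,g)$ be an almost abelian Lie algebra of real dimension $2n$ with a Hermitian structure, and let $e$ be any admissible frame, with data $\lambda\in\mathbb R$, $v\in\mathbb C^{n-1}$, $A\in M_{n-1}(\mathbb C)$. Then the following are equivalent: (a) $g$ is Bismut torsion-parallel; (b) $g$ is Bismut Kähler-like; (c) $A+A^{\ast}=0$ and $Av=0$.
   Context: Setup: $\mathfrak g$ is a real Lie algebra of dimension $2n$ with an integrable almost complex structure $J$ (i.e. $[x,y]-[Jx,Jy]+J[Jx,y]+J[x,Jy]=0$ for all $x,y$) and a $J$-invariant inner product $g$; $(J,g)$ is called a Hermitian structure, and all objects are viewed as left-invariant objects on the simply connected Lie group $G$ of $\mathfrak g$. Put $\mathfrak g^{1,0}=\{x-\sqrt{-1}Jx: x\in\mathfrak g\}$, extend $g$ complex-bilinearly; a unitary frame is a basis $e_1,\dots,e_n$ of $\mathfrak g^{1,0}$ with $g(e_i,\bar e_j)=\delta_{ij}$, and $\varphi_1,\dots,\varphi_n$ is the dual coframe of $(1,0)$-forms; $d$ is the Chevalley–Eilenberg differential ($d\alpha(x,y)=-\alpha([x,y])$ on $1$-forms). $\mathfrak g$ is almost abelian if it is non-abelian and contains an abelian ideal of codimension one. An admissible frame for an almost abelian $\mathfrak g$ is a unitary frame whose dual coframe satisfies $d\varphi_1=-\lambda\,\varphi_1\wedge\bar\varphi_1$, $\ d\varphi_i=-\bar v_i\,\varphi_1\wedge\bar\varphi_1+\sum_{j=2}^n\overline{A_{ij}}\,(\varphi_1+\bar\varphi_1)\wedge\varphi_j$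 ($2\le i\le n$), for some $\lambda\in\mathbb R$, $v=(v_2,\dots,v_n)^t\in\mathbb C^{n-1}$, $A=(A_{ij})_{2\le i,j\le n}$ (such frames always exist). $A^\ast=\overline{A}^{\,t}$. The Bismut connection $\nabla^b$ is the unique connection with $\nabla^bJ=0$, $\nabla^bg=0$ and totally skew-symmetric torsion. $g$ is Bismut torsion-parallel (BTP) if the torsion of $\nabla^b$ is $\nabla^b$-parallel; $g$ is Bismut Kähler-like (BKL) if the curvature $R^b$ of $\nabla^b$ obeys all Kähler symmetries, i.e. $R^b(X,Y)=0$ whenever $X,Y$ are both of type $(1,0)$ (or both of type $(0,1)$), and $R^b_{i\bar jk\bar\ell}=R^b_{k\bar ji\bar\ell}$ for all indices, where $R^b_{i\bar jk\bar\ell}=g(R^b(e_i,\bar e_j)e_k,\bar e_\ell)$. *)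

theory Defs
  imports "HOL-Analysis.Analysis"
begin

text \<open>A left-invariant object on the simply connected Lie group is identified with
the corresponding object on the Lie algebra. The Lie algebra is a finite dimensional
real vector space (a type of class euclidean_space; its own inner product is NOT used,
the metric g is a separate parameter).\<close>

definition lie_algebra :: "('v::euclidean_space \<Rightarrow> 'v \<Rightarrow> 'v) \<Rightarrow> bool" where
  "lie_algebra br \<longleftrightarrow> bilinear br \<and> (\<forall>x y. br x y = - br y x) \<and>
     (\<forall>x y z. br x (br y z) + br y (br z x) + br z (br x y) = 0)"

definition integrable_acs :: "('v::euclidean_space \<Rightarrow> 'v \<Rightarrow> 'v) \<Rightarrow> ('v \<Rightarrow> 'v) \<Rightarrow> bool" where
  "integrable_acs br J \<longleftrightarrow> linear J \<and> (\<forall>x. J (J x) = - x) \<and>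
     (\<forall>x y. br x y - br (J x) (J y) + J (br (J x) y) + J (br x (J y)) = 0)"

definition J_inv_inner :: "('v::euclidean_space \<Rightarrow> 'v \<Rightarrow> real) \<Rightarrow> ('v \<Rightarrow> 'v) \<Rightarrow> bool" where
  "J_inv_inner g J \<longleftrightarrow> bilinear g \<and> (\<forall>x y. g x y = g y x) \<and> (\<forall>x. x \<noteq> 0 \<longrightarrow> g x x > 0) \<and>
     (\<forall>x y. g (J x) (J y) = g x y)"

definition hermitian_lie_algebra ::
  "('v::euclidean_space \<Rightarrow> 'v \<Rightarrow> 'v) \<Rightarrow> ('v \<Rightarrow> 'v) \<Rightarrow> ('v \<Rightarrow> 'v \<Rightarrow> real) \<Rightarrow> bool" where
  "hermitian_lie_algebra br J g \<longleftrightarrow> lie_algebra br \<and> integrable_acs br J \<and> J_inv_inner g J"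

definition almost_abelian :: "('v::euclidean_space \<Rightarrow> 'v \<Rightarrow> 'v) \<Rightarrow> bool" where
  "almost_abelian br \<longleftrightarrow> (\<exists>x y. br x y \<noteq> 0) \<and>
     (\<exists>h. subspace h \<and> dim h + 1 = DIM('v) \<and> (\<forall>x y. y \<in> h \<longrightarrow> br x y \<in> h) \<and>
          (\<forall>x\<in>h. \<forall>y\<in>h. br x y = 0))"

text \<open>The complexification g^C is modelled as pairs (a,b), standing for a + sqrt(-1) b.\<close>

definition cscale :: "complex \<Rightarrow> 'v::real_vector \<times> 'v \<Rightarrow> 'v \<times> 'v" where
  "cscale c z = (Re c *\<^sub>R fst z - Im c *\<^sub>R snd z, Re c *\<^sub>R snd z + Im c *\<^sub>R fst z)"

definition cconj :: "'v::real_vector \<times> 'v \<Rightarrow> 'v \<times> 'v" where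
  "cconj z = (fst z, - snd z)"

definition cbil :: "('v::real_vector \<Rightarrow> 'w::real_vector \<Rightarrow> 'u::real_vector) \<Rightarrow> 'v \<times> 'v \<Rightarrow> 'w \<times> 'w \<Rightarrow> 'u \<times> 'u" where
  "cbil B z w = (B (fst z) (fst w) - B (snd z) (snd w), B (fst z) (snd w) + B (snd z) (fst w))"

definition cmetric :: "('v::real_vector \<Rightarrow> 'v \<Rightarrow> real) \<Rightarrow> 'v \<times> 'v \<Rightarrow> 'v \<times> 'v \<Rightarrow> complex" where
  "cmetric g z w = Complex (g (fst z) (fst w) - g (snd z) (snd w)) (g (fst z) (snd w) + g (snd z) (fst w))"

definition g10 :: "('v::real_vector \<Rightarrow> 'v) \<Rightarrow> ('v \<times> 'v) set" where
  "g10 J = {(x, - J x) | x. True}"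

definition g01 :: "('v::real_vector \<Rightarrow> 'v) \<Rightarrow> ('v \<times> 'v) set" where
  "g01 J = {(x, J x) | x. True}"

definition unitary_frame ::
  "nat \<Rightarrow> ('v::euclidean_space \<Rightarrow> 'v) \<Rightarrow> ('v \<Rightarrow> 'v \<Rightarrow> real) \<Rightarrow> (nat \<Rightarrow> 'v \<times> 'v) \<Rightarrow> bool" where
  "unitary_frame n J g e \<longleftrightarrow>
     (\<forall>i\<in>{1..n}. e i \<in> g10 J) \<and>
     (\<forall>i\<in>{1..n}. \<forall>j\<in>{1..n}. cmetric g (e i) (cconj (e j)) = (if i = j then 1 else 0)) \<and>
     (\<forall>z\<in>g10 J. \<exists>c. z = (\<Sum>i=1..n. cscale (c i) (e i))) \<and>
     (\<forall>c. (\<Sum>i=1..n. cscale (c i) (e i)) = 0 \<longrightarrow> (\<forall>i\<in>{1..n}. c i = 0))"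

definition clinear_form :: "('v::real_vector \<times> 'v \<Rightarrow> complex) \<Rightarrow> bool" where
  "clinear_form \<alpha> \<longleftrightarrow> (\<forall>z w. \<alpha> (z + w) = \<alpha> z + \<alpha> w) \<and> (\<forall>c z. \<alpha> (cscale c z) = c * \<alpha> z)"

definition dual_coframe :: "nat \<Rightarrow> (nat \<Rightarrow> 'v::real_vector \<times> 'v) \<Rightarrow> (nat \<Rightarrow> 'v \<times> 'v \<Rightarrow> complex) \<Rightarrow> bool" where
  "dual_coframe n e \<phi> \<longleftrightarrow> (\<forall>i\<in>{1..n}. clinear_form (\<phi> i) \<and>
      (\<forall>j\<in>{1..n}. \<phi> i (e j) = (if i = j then 1 else 0) \<and> \<phi> i (cconj (e j)) = 0))"

definition conj_form :: "('v::real_vector \<times> 'v \<Rightarrow> complex) \<Rightarrow> 'v \<times> 'v \<Rightarrow> complex" where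
  "conj_form \<alpha> z = cnj (\<alpha> (cconj z))"

definition wedge :: "('a \<Rightarrow> complex) \<Rightarrow> ('a \<Rightarrow> complex) \<Rightarrow> 'a \<Rightarrow> 'a \<Rightarrow> complex" where
  "wedge \<alpha> \<beta> z w = \<alpha> z * \<beta> w - \<alpha> w * \<beta> z"

definition dform :: "('v::real_vector \<Rightarrow> 'v \<Rightarrow> 'v) \<Rightarrow> ('v \<times> 'v \<Rightarrow> complex) \<Rightarrow> 'v \<times> 'v \<Rightarrow> 'v \<times> 'v \<Rightarrow> complex" where
  "dform br \<alpha> z w = - \<alpha> (cbil br z w)"

definition admissible_eqs ::
  "nat \<Rightarrow> ('v::real_vector \<Rightarrow> 'v \<Rightarrow> 'v) \<Rightarrow> (nat \<Rightarrow> 'v \<times> 'v \<Rightarrow> complex) \<Rightarrow> real \<Rightarrow> (nat \<Rightarrow> complex)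
     \<Rightarrow> (nat \<Rightarrow> nat \<Rightarrow> complex) \<Rightarrow> bool" where
  "admissible_eqs n br \<phi> lam v A \<longleftrightarrow>
     (\<forall>z w. dform br (\<phi> 1) z w = - complex_of_real lam * wedge (\<phi> 1) (conj_form (\<phi> 1)) z w) \<and>
     (\<forall>i\<in>{2..n}. \<forall>z w. dform br (\<phi> i) z w =
        - cnj (v i) * wedge (\<phi> 1) (conj_form (\<phi> 1)) z w
        + (\<Sum>j=2..n. cnj (A i j) * wedge (\<lambda>u. \<phi> 1 u + conj_form (\<phi> 1) u) (\<phi> j) z w))"

text \<open>Left-invariant connections are bilinear maps nabla x y = nabla_x y.\<close>
definition torsion :: "('v::real_vector \<Rightarrow> 'v \<Rightarrow> 'v) \<Rightarrow> ('v \<Rightarrow> 'v \<Rightarrow> 'v) \<Rightarrow> 'v \<Rightarrow> 'v \<Rightarrow> 'v" where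
  "torsion br nb x y = nb x y - nb y x - br x y"

definition is_bismut_conn ::
  "('v::euclidean_space \<Rightarrow> 'v \<Rightarrow> 'v) \<Rightarrow> ('v \<Rightarrow> 'v) \<Rightarrow> ('v \<Rightarrow> 'v \<Rightarrow> real) \<Rightarrow> ('v \<Rightarrow> 'v \<Rightarrow> 'v) \<Rightarrow> bool" where
  "is_bismut_conn br J g nb \<longleftrightarrow> bilinear nb \<and>
     (\<forall>x y. nb x (J y) = J (nb x y)) \<and>
     (\<forall>x y z. g (nb x y) z + g y (nb x z) = 0) \<and>
     (\<forall>x y z. g (torsion br nb x y) z = - g (torsion br nb x z) y)"

definition bismut :: "('v::euclidean_space \<Rightarrow> 'v \<Rightarrow> 'v) \<Rightarrow> ('v \<Rightarrow> 'v) \<Rightarrow> ('v \<Rightarrow> 'v \<Rightarrow> real) \<Rightarrow> 'v \<Rightarrow> 'v \<Rightarrow> 'v" where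
  "bismut br J g = (THE nb. is_bismut_conn br J g nb)"

definition BTP :: "('v::euclidean_space \<Rightarrow> 'v \<Rightarrow> 'v) \<Rightarrow> ('v \<Rightarrow> 'v) \<Rightarrow> ('v \<Rightarrow> 'v \<Rightarrow> real) \<Rightarrow> bool" where
  "BTP br J g \<longleftrightarrow> (let nb = bismut br J g; T = torsion br nb in
     \<forall>x y z. nb x (T y z) - T (nb x y) z - T y (nb x z) = 0)"

definition ccurv :: "('v::real_vector \<Rightarrow> 'v \<Rightarrow> 'v) \<Rightarrow> ('v \<Rightarrow> 'v \<Rightarrow> 'v) \<Rightarrow> 'v \<times> 'v \<Rightarrow> 'v \<times> 'v \<Rightarrow> 'v \<times> 'v \<Rightarrow> 'v \<times> 'v" where
  "ccurv br nb X Y Z = cbil nb X (cbil nb Y Z) - cbil nb Y (cbil nb X Z) - cbil nb (cbil br X Y) Z"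

definition BKL :: "nat \<Rightarrow> ('v::euclidean_space \<Rightarrow> 'v \<Rightarrow> 'v) \<Rightarrow> ('v \<Rightarrow> 'v) \<Rightarrow> ('v \<Rightarrow> 'v \<Rightarrow> real)
     \<Rightarrow> (nat \<Rightarrow> 'v \<times> 'v) \<Rightarrow> bool" where
  "BKL n br J g e \<longleftrightarrow> (let R = ccurv br (bismut br J g) in
     (\<forall>X\<in>g10 J. \<forall>Y\<in>g10 J. \<forall>Z. R X Y Z = 0) \<and>
     (\<forall>X\<in>g01 J. \<forall>Y\<in>g01 J. \<forall>Z. R X Y Z = 0) \<and>
     (\<forall>i\<in>{1..n}. \<forall>j\<in>{1..n}. \<forall>k\<in>{1..n}. \<forall>l\<in>{1..n}.
        cmetric g (R (e i) (cconj (e j)) (e k)) (cconj (e l))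
        = cmetric g (R (e k) (cconj (e j)) (e i)) (cconj (e l))))"

end

theory Submission
  imports Defs
begin

locale herm =
  fixes br :: "'v::euclidean_space \<Rightarrow> 'v \<Rightarrow> 'v" and J :: "'v \<Rightarrow> 'v" and g :: "'v \<Rightarrow> 'v \<Rightarrow> real"
  assumes H: "hermitian_lie_algebra br J g"
begin

lemma bil_br: "bilinear br" and br_anti: "br x y = - br y x"
  and jacobi: "br x (br y z) + br y (br z x) + br z (br x y) = 0"
  using H unfolding hermitian_lie_algebra_def lie_algebra_def by blast+

lemma lin_J: "linear J" and JJ[simp]: "J (J x) = - x"
  and integ: "br x y - br (J x) (J y) + J (br (J x) y) + J (br x (J y)) = 0"
  using H unfolding hermitian_lie_algebra_def integrable_acs_def by blast+

lemma bil_g: "bilinear g" and g_sym: "g x y = g y x" and g_pos: "x \<noteq> 0 \<Longrightarrow> g x x > 0"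
  and g_JJ[simp]: "g (J x) (J y) = g x y"
  using H unfolding hermitian_lie_algebra_def J_inv_inner_def by blast+

lemma J_add[simp]: "J (x + y) = J x + J y" and J_scale[simp]: "J (c *\<^sub>R x) = c *\<^sub>R J x"
  and J_neg[simp]: "J (- x) = - J x" and J_diff[simp]: "J (x - y) = J x - J y" and J_zero[simp]: "J 0 = 0"
  using lin_J by (auto simp: linear_add linear_scale linear_neg linear_diff linear_0)

lemma J_sum: "J (sum f S) = sum (\<lambda>i. J (f i)) S"
  using lin_J by (simp add: linear_sum)

lemma g_addl[simp]: "g (x + y) z = g x z + g y z" and g_addr[simp]: "g z (x + y) = g z x + g z y"
  and g_scalel[simp]: "g (c *\<^sub>R x) y = c * g x y" and g_scaler[simp]: "g x (c *\<^sub>R y) = c * g x y"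
  and g_negl[simp]: "g (- x) y = - g x y" and g_negr[simp]: "g x (- y) = - g x y"
  and g_diffl[simp]: "g (x - y) z = g x z - g y z" and g_diffr[simp]: "g z (x - y) = g z x - g z y"
  and g_zerol[simp]: "g 0 x = 0" and g_zeror[simp]: "g x 0 = 0"
  using bil_g by (auto simp: bilinear_ladd bilinear_radd bilinear_lmul bilinear_rmul bilinear_lneg
      bilinear_rneg bilinear_lsub bilinear_rsub bilinear_lzero bilinear_rzero)

lemma g_suml: "g (sum f S) y = (\<Sum>i\<in>S. g (f i) y)"
proof -
  interpret l: linear "\<lambda>x. g x y" using bil_g by (simp add: bilinear_def)
  show ?thesis by (simp add: l.sum)
qed
lemma g_sumr: "g y (sum f S) = (\<Sum>i\<in>S. g y (f i))"
proof -
  have "g y (sum f S) = g (sum f S) y" by (rule g_sym)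
  also have "\<dots> = (\<Sum>i\<in>S. g (f i) y)" by (rule g_suml)
  also have "\<dots> = (\<Sum>i\<in>S. g y (f i))" by (rule sum.cong) (auto intro: g_sym)
  finally show ?thesis .
qed

lemma br_addl[simp]: "br (x + y) z = br x z + br y z" and br_addr[simp]: "br z (x + y) = br z x + br z y"
  and br_scalel[simp]: "br (c *\<^sub>R x) y = c *\<^sub>R br x y" and br_scaler[simp]: "br x (c *\<^sub>R y) = c *\<^sub>R br x y"
  and br_negl[simp]: "br (- x) y = - br x y" and br_negr[simp]: "br x (- y) = - br x y"
  and br_diffl[simp]: "br (x - y) z = br x z - br y z" and br_diffr[simp]: "br z (x - y) = br z x - br z y"
  and br_zerol[simp]: "br 0 x = 0" and br_zeror[simp]: "br x 0 = 0"
  using bil_br by (auto simp: bilinear_ladd bilinear_radd bilinear_lmul bilinear_rmul bilinear_lneg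
      bilinear_rneg bilinear_lsub bilinear_rsub bilinear_lzero bilinear_rzero)

lemma br_self[simp]: "br x x = 0"
proof -
  have "(2::real) *\<^sub>R br x x = 0" using br_anti[of x x] by (metis add.right_inverse scaleR_2)
  then show ?thesis by simp
qed

lemma g_Jl: "g (J x) y = - g x (J y)"
  using g_JJ[of "J x" y] by simp

lemma g_J_self[simp]: "g (J x) x = 0" "g x (J x) = 0"
  using g_Jl[of x x] g_sym[of "J x" x] by auto

lemma g_eq0: assumes "\<And>t. g x t = 0" shows "x = 0"
  using assms[of x] g_pos[of x] by force

lemma vec_eqI: assumes "\<And>t. g x t = g y t" shows "x = y"
  using g_eq0[of "x - y"] assms by simp

lemma bismut_unique:
  assumes c1: "is_bismut_conn br J g n1" and c2: "is_bismut_conn br J g n2"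
  shows "n1 = n2"
proof -
  have b1: "bilinear n1" and j1: "\<And>x y. n1 x (J y) = J (n1 x y)"
    and m1: "\<And>x y z. g (n1 x y) z + g y (n1 x z) = 0"
    and t1: "\<And>x y z. g (torsion br n1 x y) z = - g (torsion br n1 x z) y"
    using c1 unfolding is_bismut_conn_def by blast+
  have b2: "bilinear n2" and j2: "\<And>x y. n2 x (J y) = J (n2 x y)"
    and m2: "\<And>x y z. g (n2 x y) z + g y (n2 x z) = 0"
    and t2: "\<And>x y z. g (torsion br n2 x y) z = - g (torsion br n2 x z) y"
    using c2 unfolding is_bismut_conn_def by blast+
  define a where "a x y z = g (n1 x y) z - g (n2 x y) z" for x y z
  have a23: "a x y z = - a x z y" for x y z
    using m1[of x y z] m2[of x y z] g_sym[of y "n1 x z"] g_sym[of y "n2 x z"] unfolding a_def by linarith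
  define b where "b x y z = a x y z - a y x z" for x y z
  have b23: "b x y z = - b x z y" for x y z
    using t1[of x y z] t2[of x y z] unfolding b_def a_def torsion_def by (simp; linarith)
  have aeq: "2 * a x y z = b x y z" for x y z
  proof -
    have "b x y z - b y z x + b z x y = 2 * a x y z"
      unfolding b_def using a23[of x y z] a23[of y x z] a23[of z x y] by linarith
    moreover have "b y z x = b x y z" using b23[of y z x] unfolding b_def by simp
    moreover have "b z x y = b x y z" using b23[of x z y] unfolding b_def by simp
    ultimately show ?thesis by linarith
  qed
  have a12: "a x y z = - a y x z" for x y z using aeq[of x y z] aeq[of y x z] unfolding b_def by simp
  have aJ: "a x (J y) z = - a x y (J z)" for x y z
    unfolding a_def j1 j2 g_Jl by simp
  have cyc: "a x y z = a y z x" for x y z using a12[of x y z] a23[of y x z] by simp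
  have p1: "a (J x) y z = - a x (J y) z" for x y z
    using cyc[of z "J x" y] aJ[of z x y] cyc[of x "J y" z] cyc[of "J y" z x] by simp
  have p2: "a (J x) y z = - a x y (J z)" for x y z
    using cyc[of "J x" y z] aJ[of y z x] cyc[of y "J z" x] cyc[of "J z" x y] by simp
  have aJx: "a (J x) y z = 0" for x y z using p1[of x y z] p2[of x y z] aJ[of x y z] by simp
  have a0: "a x y z = 0" for x y z
  proof -
    have "a x y z = a (J (- J x)) y z" by simp
    also have "\<dots> = 0" by (rule aJx)
    finally show ?thesis .
  qed
  show ?thesis
  proof (intro ext)
    fix x y show "n1 x y = n2 x y"
      using a0[of x y] unfolding a_def by (intro vec_eqI) simp
  qed
qed

end

locale aa = herm br J g for br :: "'v::euclidean_space \<Rightarrow> 'v \<Rightarrow> 'v" and J g +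
  fixes n :: nat and e :: "nat \<Rightarrow> 'v \<times> 'v" and \<phi> :: "nat \<Rightarrow> 'v \<times> 'v \<Rightarrow> complex"
    and lam :: real and v :: "nat \<Rightarrow> complex" and A :: "nat \<Rightarrow> nat \<Rightarrow> complex"
  assumes dimv: "DIM('v) = 2 * n" and uf: "unitary_frame n J g e"
    and dc: "dual_coframe n e \<phi>" and adm: "admissible_eqs n br \<phi> lam v A"
begin

lemma n_pos: "1 \<le> n" using dimv DIM_positive[where 'a='v] by linarith

definition xv :: "nat \<Rightarrow> 'v" where "xv k = fst (e k)"

lemma e_eq: "k \<in> {1..n} \<Longrightarrow> e k = (xv k, - J (xv k))"
  using uf unfolding unitary_frame_def g10_def xv_def by force

lemma cm_e: assumes "i \<in> {1..n}" "j \<in> {1..n}"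
  shows "cmetric g (e i) (cconj (e j)) = Complex (2 * g (xv i) (xv j)) (2 * g (xv i) (J (xv j)))"
  using assms by (simp add: e_eq cmetric_def cconj_def g_Jl)

lemma orth: assumes "i \<in> {1..n}" "j \<in> {1..n}"
  shows "g (xv i) (xv j) = (if i = j then 1/2 else 0)" "g (xv i) (J (xv j)) = 0"
proof -
  have "cmetric g (e i) (cconj (e j)) = (if i = j then 1 else 0)"
    using uf assms unfolding unitary_frame_def by blast
  then have "Complex (2 * g (xv i) (xv j)) (2 * g (xv i) (J (xv j))) = (if i = j then 1 else 0)"
    using cm_e[OF assms] by simp
  then show "g (xv i) (xv j) = (if i = j then 1/2 else 0)" "g (xv i) (J (xv j)) = 0"
    by (auto simp: Complex_eq_0 Complex_eq_1 split: if_splits)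
qed

lemma orth2: assumes "i \<in> {1..n}" "j \<in> {1..n}"
  shows "g (J (xv i)) (xv j) = 0" "g (J (xv i)) (J (xv j)) = (if i = j then 1/2 else 0)"
proof -
  show "g (J (xv i)) (xv j) = 0" using g_Jl[of "xv i" "xv j"] orth(2)[OF assms] by simp
  show "g (J (xv i)) (J (xv j)) = (if i = j then 1/2 else 0)" using orth(1)[OF assms] by simp
qed

lemma expand: "y = (\<Sum>k\<in>{1..n}. (2 * g y (xv k)) *\<^sub>R xv k + (2 * g y (J (xv k))) *\<^sub>R J (xv k))"
proof -
  have "(y, - J y) \<in> g10 J" unfolding g10_def by blast
  then obtain c where c: "(y, - J y) = (\<Sum>i=1..n. cscale (c i) (e i))"
    using uf unfolding unitary_frame_def by blast
  have y: "y = (\<Sum>i=1..n. Re (c i) *\<^sub>R xv i + Im (c i) *\<^sub>R J (xv i))"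
  proof -
    have "y = fst (\<Sum>i=1..n. cscale (c i) (e i))" using c by (metis fst_conv)
    also have "\<dots> = (\<Sum>i=1..n. fst (cscale (c i) (e i)))" by (simp add: fst_sum)
    also have "\<dots> = (\<Sum>i=1..n. Re (c i) *\<^sub>R xv i + Im (c i) *\<^sub>R J (xv i))"
      by (rule sum.cong) (auto simp: e_eq cscale_def)
    finally show ?thesis .
  qed
  have re: "Re (c k) = 2 * g y (xv k)" and im: "Im (c k) = 2 * g y (J (xv k))" if k: "k \<in> {1..n}" for k
  proof -
    have "g y (xv k) = (\<Sum>i=1..n. Re (c i) * g (xv i) (xv k) + Im (c i) * g (J (xv i)) (xv k))"
      by (subst y) (simp add: g_suml)
    also have "\<dots> = (\<Sum>i=1..n. (if i = k then Re (c i) / 2 else 0))"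
      by (rule sum.cong) (use k in \<open>auto simp: orth orth2\<close>)
    finally show "Re (c k) = 2 * g y (xv k)" using k by simp
    have "g y (J (xv k)) = (\<Sum>i=1..n. Re (c i) * g (xv i) (J (xv k)) + Im (c i) * g (J (xv i)) (J (xv k)))"
      by (subst y) (simp add: g_suml)
    also have "\<dots> = (\<Sum>i=1..n. (if i = k then Im (c i) / 2 else 0))"
      by (rule sum.cong) (use k in \<open>auto simp: orth orth2\<close>)
    finally show "Im (c k) = 2 * g y (J (xv k))" using k by simp
  qed
  show ?thesis
    apply (subst y)
    apply (rule sum.cong)
    using re im by auto
qed

definition zeta :: "nat \<Rightarrow> 'v \<Rightarrow> complex" where "zeta i y = \<phi> i (y, 0)"

lemma cl: "i \<in> {1..n} \<Longrightarrow> clinear_form (\<phi> i)"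
  and phi_e: "i \<in> {1..n} \<Longrightarrow> j \<in> {1..n} \<Longrightarrow> \<phi> i (e j) = (if i = j then 1 else 0)"
  and phi_ce: "i \<in> {1..n} \<Longrightarrow> j \<in> {1..n} \<Longrightarrow> \<phi> i (cconj (e j)) = 0"
  using dc unfolding dual_coframe_def by auto

lemma phi_add: "i \<in> {1..n} \<Longrightarrow> \<phi> i (z + w) = \<phi> i z + \<phi> i w"
  using cl[of i] unfolding clinear_form_def by blast
lemma phi_scale: "i \<in> {1..n} \<Longrightarrow> \<phi> i (cscale c z) = c * \<phi> i z"
  using cl[of i] unfolding clinear_form_def by blast

lemma zeta_add: "i \<in> {1..n} \<Longrightarrow> zeta i (a + b) = zeta i a + zeta i b"
  using cl[of i] unfolding zeta_def clinear_form_def by (metis add_Pair add_0)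

lemma zeta_scale: "i \<in> {1..n} \<Longrightarrow> zeta i (r *\<^sub>R a) = of_real r * zeta i a"
proof -
  assume i: "i \<in> {1..n}"
  have "(r *\<^sub>R a, 0::'v) = cscale (of_real r) (a, 0)" by (simp add: cscale_def)
  then show ?thesis using cl[OF i] unfolding zeta_def clinear_form_def by metis
qed

lemma zeta_zero: "i \<in> {1..n} \<Longrightarrow> zeta i 0 = 0"
  using zeta_scale[of i 0 0] by simp

lemma zeta_sum: "i \<in> {1..n} \<Longrightarrow> zeta i (sum f S) = (\<Sum>k\<in>S. zeta i (f k))"
  by (induction S rule: infinite_finite_induct) (auto simp: zeta_zero zeta_add)

lemma zeta_x: assumes "i \<in> {1..n}" "k \<in> {1..n}" shows "zeta i (xv k) = (if i = k then 1/2 else 0)"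
proof -
  have "(xv k, 0) = cscale (1/2) (e k) + cscale (1/2) (cconj (e k))"
    using assms by (simp add: e_eq cscale_def cconj_def scaleR_2[symmetric])
  then show ?thesis using phi_e[OF assms] phi_ce[OF assms] unfolding zeta_def
    by (simp add: phi_add[OF assms(1)] phi_scale[OF assms(1)])
qed

lemma zeta_Jx: assumes "i \<in> {1..n}" "k \<in> {1..n}" shows "zeta i (J (xv k)) = (if i = k then \<i>/2 else 0)"
proof -
  have "(J (xv k), 0) = cscale (\<i>/2) (e k) + cscale (-\<i>/2) (cconj (e k))"
    using assms by (simp add: e_eq cscale_def cconj_def scaleR_2[symmetric])
  then show ?thesis using phi_e[OF assms] phi_ce[OF assms] unfolding zeta_def
    by (simp add: phi_add[OF assms(1)] phi_scale[OF assms(1)])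
qed

lemma zeta_formula: assumes i: "i \<in> {1..n}" shows "zeta i y = Complex (g y (xv i)) (g y (J (xv i)))"
proof -
  have "zeta i y = (\<Sum>k\<in>{1..n}. of_real (2 * g y (xv k)) * zeta i (xv k) + of_real (2 * g y (J (xv k))) * zeta i (J (xv k)))"
    by (subst expand) (simp add: zeta_sum[OF i] zeta_add[OF i] zeta_scale[OF i])
  also have "\<dots> = (\<Sum>k\<in>{1..n}. if k = i then Complex (g y (xv i)) (g y (J (xv i))) else 0)"
    by (rule sum.cong) (auto simp: zeta_x[OF i] zeta_Jx[OF i] complex_eq_iff)
  finally show ?thesis using i by simp
qed

lemma vec_eq0_zeta: assumes "\<And>i. i \<in> {1..n} \<Longrightarrow> zeta i y = 0" shows "y = 0"
proof -
  have "g y (xv k) = 0 \<and> g y (J (xv k)) = 0" if "k \<in> {1..n}" for k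
    using assms[OF that] zeta_formula[OF that, of y] by (simp add: Complex_eq_0)
  then have "(\<Sum>k\<in>{1..n}. (2 * g y (xv k)) *\<^sub>R xv k + (2 * g y (J (xv k))) *\<^sub>R J (xv k)) = 0"
    by (intro sum.neutral) simp
  then show ?thesis using expand[of y] by simp
qed

end

context aa begin

definition u :: 'v where "u = xv 1"
definition N1 :: "'v set" where "N1 = {p. g p u = 0 \<and> g p (J u) = 0}"
definition w :: 'v where "w = br u (J u) + lam *\<^sub>R J u"

lemma one_in: "1 \<in> {1..n}" using n_pos by simp
lemma two_in: "i \<in> {2..n} \<Longrightarrow> i \<in> {1..n}" by auto

lemma u_uu[simp]: "g u u = 1/2" and u_uJu[simp]: "g u (J u) = 0" and u_Juu[simp]: "g (J u) u = 0"
  and u_JuJu[simp]: "g (J u) (J u) = 1/2"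
  using orth[OF one_in one_in] orth2[OF one_in one_in] unfolding u_def by auto

definition z1 :: "'v \<Rightarrow> complex" where "z1 y = Complex (g y u) (g y (J u))"

lemma zeta1: "zeta 1 y = z1 y"
  using zeta_formula[OF one_in] unfolding u_def z1_def by simp
lemma zeta1'[simp]: "zeta (Suc 0) y = z1 y"
  using zeta1 by simp

lemma z1_add[simp]: "z1 (a + b) = z1 a + z1 b" and z1_scale[simp]: "z1 (r *\<^sub>R a) = of_real r * z1 a"
  unfolding z1_def by (simp_all add: complex_eq_iff)

lemma N1_iff: "p \<in> N1 \<longleftrightarrow> z1 p = 0"
  unfolding N1_def zeta1 z1_def by (simp add: Complex_eq_0)

lemma zeta_hi_u: "i \<in> {2..n} \<Longrightarrow> zeta i u = 0" and zeta_hi_Ju: "i \<in> {2..n} \<Longrightarrow> zeta i (J u) = 0"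
  using zeta_x[OF two_in one_in] zeta_Jx[OF two_in one_in] unfolding u_def by auto

lemma zeta_br0: "i \<in> {1..n} \<Longrightarrow> zeta i (br y z) = - dform br (\<phi> i) (y, 0) (z, 0)"
  unfolding zeta_def dform_def cbil_def by simp

abbreviation W1 where "W1 y z \<equiv> z1 y * cnj (z1 z) - z1 z * cnj (z1 y)"

lemma cf: "conj_form (\<phi> i) (y, 0) = cnj (zeta i y)"
  unfolding conj_form_def cconj_def zeta_def by simp

lemma zeta1_br: "z1 (br y z) = lam * W1 y z"
proof -
  have "dform br (\<phi> 1) (y,0) (z,0) = - complex_of_real lam * wedge (\<phi> 1) (conj_form (\<phi> 1)) (y,0) (z,0)"
    using adm unfolding admissible_eqs_def by blast
  then show ?thesis using zeta_br0[OF one_in, of y z] unfolding wedge_def cf by (simp add: zeta_def[symmetric] zeta1)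
qed

lemma zetai_br: assumes i: "i \<in> {2..n}"
  shows "zeta i (br y z) = cnj (v i) * W1 y z
     - (\<Sum>j=2..n. cnj (A i j) * ((z1 y + cnj (z1 y)) * zeta j z - (z1 z + cnj (z1 z)) * zeta j y))"
proof -
  have "dform br (\<phi> i) (y,0) (z,0) = - cnj (v i) * wedge (\<phi> 1) (conj_form (\<phi> 1)) (y,0) (z,0)
        + (\<Sum>j=2..n. cnj (A i j) * wedge (\<lambda>u. \<phi> 1 u + conj_form (\<phi> 1) u) (\<phi> j) (y,0) (z,0))"
    using adm i unfolding admissible_eqs_def by blast
  then show ?thesis using zeta_br0[OF two_in[OF i], of y z] unfolding wedge_def cf
    by (simp add: zeta_def[symmetric] zeta1 algebra_simps sum_subtractf)
qed

lemma zeta1_N1: "p \<in> N1 \<Longrightarrow> z1 p = 0" using N1_iff by simp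

lemma zeta_eq0_all: assumes "z1 y = 0" "\<And>i. i \<in> {2..n} \<Longrightarrow> zeta i y = 0" shows "y = 0"
proof (rule vec_eq0_zeta)
  fix i assume "i \<in> {1..n}"
  then have "i = 1 \<or> i \<in> {2..n}" by auto
  then show "zeta i y = 0" using assms by auto
qed

lemma br_N1: assumes "p \<in> N1" "q \<in> N1" shows "br p q = 0"
proof (rule zeta_eq0_all)
  show "z1 (br p q) = 0" using assms by (simp add: zeta1_br zeta1_N1)
  show "zeta i (br p q) = 0" if "i \<in> {2..n}" for i
    using assms that by (simp add: zetai_br zeta1_N1)
qed

lemma zeta1_u: "z1 u = 1/2" and zeta1_Ju: "z1 (J u) = \<i>/2"
  by (simp_all add: z1_def complex_eq_iff)

lemma br_Ju: assumes "p \<in> N1" shows "br (J u) p = 0"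
proof (rule zeta_eq0_all)
  show "z1 (br (J u) p) = 0" using assms by (simp add: zeta1_br zeta1_N1)
  show "zeta i (br (J u) p) = 0" if "i \<in> {2..n}" for i
    using assms that by (simp add: zetai_br zeta1_N1 zeta1_Ju)
qed

lemma bru_N1: assumes "p \<in> N1" shows "br u p \<in> N1"
  using assms by (simp add: N1_iff zeta1_br zeta1_N1)

lemma zeta_bru: assumes "p \<in> N1" "i \<in> {2..n}"
  shows "zeta i (br u p) = - (\<Sum>j=2..n. cnj (A i j) * zeta j p)"
proof -
  have "(\<Sum>j=2..n. cnj (A i j) * ((z1 u + cnj (z1 u)) * zeta j p - (z1 p + cnj (z1 p)) * zeta j u))
      = (\<Sum>j=2..n. cnj (A i j) * zeta j p)"
    using assms by (intro sum.cong) (auto simp: zeta1_N1 zeta1_u)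
  then show ?thesis using assms by (simp add: zetai_br zeta1_N1)
qed

lemma w_N1: "w \<in> N1"
proof -
  have "z1 w = 0"
    unfolding w_def by (simp add: zeta1_br zeta1_u zeta1_Ju complex_eq_iff)
  then show ?thesis by (simp add: N1_iff)
qed

lemma zeta_w: assumes i: "i \<in> {2..n}" shows "zeta i w = - \<i> * cnj (v i) / 2"
proof -
  have "(\<Sum>j=2..n. cnj (A i j) * ((z1 u + cnj (z1 u)) * zeta j (J u) - (z1 (J u) + cnj (z1 (J u))) * zeta j u)) = 0"
    by (intro sum.neutral) (auto simp: zeta_hi_u zeta_hi_Ju)
  then show ?thesis unfolding w_def
    using i by (simp add: zeta_add[OF two_in[OF i]] zeta_scale[OF two_in[OF i]] zetai_br zeta1_u zeta1_Ju zeta_hi_Ju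
        complex_eq_iff)
qed

lemma J_N1: "p \<in> N1 \<Longrightarrow> J p \<in> N1"
  unfolding N1_def by (simp add: g_Jl)

lemma bru_J: assumes p: "p \<in> N1" shows "br u (J p) = J (br u p)"
proof -
  have "br u p - br (J u) (J p) + J (br (J u) p) + J (br u (J p)) = 0" by (rule integ)
  then have "br u p + J (br u (J p)) = 0" using br_Ju[OF p] br_Ju[OF J_N1[OF p]] by simp
  then have "J (br u p) + J (J (br u (J p))) = 0" by (metis J_add J_zero)
  then show ?thesis by (simp add: eq_neg_iff_add_eq_0[symmetric])
qed

lemma xv_N1: "k \<in> {2..n} \<Longrightarrow> xv k \<in> N1"
  unfolding N1_def u_def using orth[OF two_in one_in, of k] orth2[OF one_in two_in, of k] g_sym
  by (auto simp: g_sym)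

end

context aa begin

definition pr :: "'v \<Rightarrow> 'v" where "pr y = y - (2 * g y u) *\<^sub>R u - (2 * g y (J u)) *\<^sub>R J u"
definition Dg :: "'v \<Rightarrow> 'v" where "Dg y = br u (pr y)"
definition Dt :: "'v \<Rightarrow> 'v" where
  "Dt y = (\<Sum>k\<in>{1..n}. (2 * g y (Dg (xv k))) *\<^sub>R xv k + (2 * g y (Dg (J (xv k)))) *\<^sub>R J (xv k))"
definition SS :: "'v \<Rightarrow> 'v" where "SS y = (1/2) *\<^sub>R (Dg y + Dt y)"
definition KK :: "'v \<Rightarrow> 'v" where "KK y = (1/2) *\<^sub>R (Dg y - Dt y)"

lemma N1_I: "g p u = 0 \<Longrightarrow> g p (J u) = 0 \<Longrightarrow> p \<in> N1" unfolding N1_def by simp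
lemma N1_D: "p \<in> N1 \<Longrightarrow> g p u = 0" "p \<in> N1 \<Longrightarrow> g p (J u) = 0" unfolding N1_def by simp_all

lemma pr_N1: "pr y \<in> N1" by (rule N1_I) (simp_all add: pr_def)
lemma pr_add: "pr (a + b) = pr a + pr b" and pr_scale: "pr (r *\<^sub>R a) = r *\<^sub>R pr a"
  by (simp_all add: pr_def algebra_simps)
lemma pr_J: "pr (J y) = J (pr y)" by (simp add: pr_def g_Jl algebra_simps)
lemma pr_id: "p \<in> N1 \<Longrightarrow> pr p = p" by (simp add: pr_def N1_D)
lemma pr_u: "pr u = 0" and pr_Ju: "pr (J u) = 0" by (simp_all add: pr_def)

lemma Dg_add: "Dg (a + b) = Dg a + Dg b" and Dg_scale: "Dg (r *\<^sub>R a) = r *\<^sub>R Dg a"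
  by (simp_all add: Dg_def pr_add pr_scale)
lemma lin_Dg: "linear Dg" by (rule linearI) (simp_all add: Dg_add Dg_scale)
lemma Dg_sum: "Dg (sum f I) = (\<Sum>i\<in>I. Dg (f i))" using linear_sum[OF lin_Dg] by (simp add: o_def)
lemma Dg_u: "Dg u = 0" and Dg_Ju: "Dg (J u) = 0" by (simp_all add: Dg_def pr_u pr_Ju)
lemma Dg_N1: "Dg y \<in> N1" by (simp add: Dg_def bru_N1 pr_N1)
lemma Dg_J: "Dg (J y) = J (Dg y)" by (simp add: Dg_def pr_J bru_J pr_N1)
lemma Dg_p: "p \<in> N1 \<Longrightarrow> Dg p = br u p" by (simp add: Dg_def pr_id)

lemma Dt_adj: "g (Dt y) z = g y (Dg z)"
proof -
  have "g (Dt y) z = (\<Sum>k\<in>{1..n}. 2 * g y (Dg (xv k)) * g (xv k) z + 2 * g y (Dg (J (xv k))) * g (J (xv k)) z)"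
    by (simp add: Dt_def g_suml)
  also have "\<dots> = (\<Sum>k\<in>{1..n}. g y (Dg ((2 * g z (xv k)) *\<^sub>R xv k + (2 * g z (J (xv k))) *\<^sub>R J (xv k))))"
    by (rule sum.cong) (simp_all add: Dg_add Dg_scale g_sym)
  also have "\<dots> = g y (Dg z)"
    by (subst (2) expand[of z]) (simp add: Dg_sum g_sumr)
  finally show ?thesis .
qed

lemma Dg_adj: "g (Dg y) z = g y (Dt z)"
  using Dt_adj[of z y] g_sym by metis

lemma Dt_u: "Dt u = 0" and Dt_Ju: "Dt (J u) = 0"
proof -
  show "Dt u = 0" by (rule g_eq0) (simp add: Dt_adj g_sym[of u] N1_D[OF Dg_N1])
  show "Dt (J u) = 0" by (rule g_eq0) (simp add: Dt_adj g_sym[of "J u"] N1_D[OF Dg_N1])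
qed

lemma Dt_N1: "Dt y \<in> N1" by (rule N1_I) (simp_all add: Dt_adj Dg_u Dg_Ju)
lemma Dt_add: "Dt (a + b) = Dt a + Dt b" by (rule vec_eqI) (simp add: Dt_adj)
lemma Dt_scale: "Dt (r *\<^sub>R a) = r *\<^sub>R Dt a" by (rule vec_eqI) (simp add: Dt_adj)
lemma Dt_J: "Dt (J y) = J (Dt y)"
  by (rule vec_eqI) (simp add: Dt_adj g_Jl Dg_J)

lemma S_add[simp]: "SS (a + b) = SS a + SS b" and S_scale[simp]: "SS (r *\<^sub>R a) = r *\<^sub>R SS a"
  and K_add[simp]: "KK (a + b) = KK a + KK b" and K_scale[simp]: "KK (r *\<^sub>R a) = r *\<^sub>R KK a"
  by (simp_all add: SS_def KK_def Dg_add Dg_scale Dt_add Dt_scale algebra_simps)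
lemma S_neg[simp]: "SS (- a) = - SS a" and K_neg[simp]: "KK (- a) = - KK a"
  using S_scale[of "-1" a] K_scale[of "-1" a] by simp_all
lemma S_diff[simp]: "SS (a - b) = SS a - SS b" and K_diff[simp]: "KK (a - b) = KK a - KK b"
  using S_add[of a "-b"] K_add[of a "-b"] by simp_all
lemma S_zero[simp]: "SS 0 = 0" and K_zero[simp]: "KK 0 = 0"
  using S_scale[of 0 0] K_scale[of 0 0] by simp_all
lemma S_J[simp]: "SS (J a) = J (SS a)" and K_J[simp]: "KK (J a) = J (KK a)"
  by (simp_all add: SS_def KK_def Dg_J Dt_J)
lemma S_u[simp]: "SS u = 0" and K_u[simp]: "KK u = 0"
  by (simp_all add: SS_def KK_def Dg_u Dt_u)
lemma S_N1: "SS y \<in> N1" and K_N1: "KK y \<in> N1"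
  using Dg_N1[of y] Dt_N1[of y] by (auto simp: SS_def KK_def N1_def)
lemma S_adj: "g (SS a) b = g a (SS b)" and K_adj: "g (KK a) b = - g a (KK b)"
  by (simp_all add: SS_def KK_def Dg_adj Dt_adj algebra_simps)
lemma Dg_SK: "Dg y = SS y + KK y"
proof -
  have "SS y + KK y = (1/2) *\<^sub>R Dg y + (1/2) *\<^sub>R Dg y" by (simp add: SS_def KK_def algebra_simps)
  also have "\<dots> = Dg y" by (simp only: scaleR_add_left[symmetric]) simp
  finally show ?thesis by simp
qed
lemma bru_SK: "p \<in> N1 \<Longrightarrow> br u p = SS p + KK p" using Dg_SK Dg_p by simp

lemma S_cu: "g (SS a) u = 0" "g (SS a) (J u) = 0" "g (KK a) u = 0" "g (KK a) (J u) = 0"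
  using S_N1[of a] K_N1[of a] by (simp_all add: N1_D)

lemma w_cu: "g w u = 0" "g w (J u) = 0" using w_N1 by (simp_all add: N1_D)

lemma br_formula: "br x y = (4 * (g x u * g y (J u) - g x (J u) * g y u)) *\<^sub>R (w - lam *\<^sub>R J u)
   + (2 * g x u) *\<^sub>R Dg y - (2 * g y u) *\<^sub>R Dg x"
proof -
  have x: "x = (2 * g x u) *\<^sub>R u + (2 * g x (J u)) *\<^sub>R J u + pr x" by (simp add: pr_def)
  have y: "y = (2 * g y u) *\<^sub>R u + (2 * g y (J u)) *\<^sub>R J u + pr y" by (simp add: pr_def)
  have uJu: "br u (J u) = w - lam *\<^sub>R J u" by (simp add: w_def)
  have Juu: "br (J u) u = - (w - lam *\<^sub>R J u)" using br_anti[of "J u" u] uJu by simp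
  have pu: "br (pr a) u = - Dg a" for a using br_anti[of "pr a" u] by (simp add: Dg_def)
  have pJu: "br (pr a) (J u) = 0" for a using br_anti[of "pr a" "J u"] br_Ju[OF pr_N1] by simp
  have "br x y = br ((2 * g x u) *\<^sub>R u + (2 * g x (J u)) *\<^sub>R J u + pr x)
                    ((2 * g y u) *\<^sub>R u + (2 * g y (J u)) *\<^sub>R J u + pr y)"
    using x y by simp
  also have "\<dots> = (4 * (g x u * g y (J u) - g x (J u) * g y u)) *\<^sub>R (w - lam *\<^sub>R J u)
   + (2 * g x u) *\<^sub>R Dg y - (2 * g y u) *\<^sub>R Dg x"
    by (simp add: uJu Juu pu pJu br_Ju[OF pr_N1] br_N1[OF pr_N1 pr_N1] Dg_def[symmetric]
        algebra_simps scaleR_add_right scaleR_diff_right)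
  finally show ?thesis .
qed

end

context aa begin

definition cu :: "'v \<Rightarrow> real" where "cu a = g a u"
definition cj :: "'v \<Rightarrow> real" where "cj a = g a (J u)"
definition cw :: "'v \<Rightarrow> real" where "cw a = g a w"

lemma g_cu1: "g a u = cu a" and g_cu2: "g u a = cu a" and g_cj1: "g a (J u) = cj a"
  and g_cw1: "g a w = cw a" and g_cw2: "g w a = cw a"
  by (simp_all add: cu_def cj_def cw_def g_sym)

lemma gJl: "g (J a) b = - g a (J b)" by (rule g_Jl)
lemma gSl: "g (SS a) b = g a (SS b)" by (rule S_adj)
lemma gKl: "g (KK a) b = - g a (KK b)" by (rule K_adj)

lemma c_lin:
  "cu (a + b) = cu a + cu b" "cu (r *\<^sub>R a) = r * cu a" "cu (- a) = - cu a" "cu (a - b) = cu a - cu b" "cu 0 = 0"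
  "cj (a + b) = cj a + cj b" "cj (r *\<^sub>R a) = r * cj a" "cj (- a) = - cj a" "cj (a - b) = cj a - cj b" "cj 0 = 0"
  "cw (a + b) = cw a + cw b" "cw (r *\<^sub>R a) = r * cw a" "cw (- a) = - cw a" "cw (a - b) = cw a - cw b" "cw 0 = 0"
  by (simp_all add: cu_def cj_def cw_def)

lemma c_vals:
  "cu u = 1/2" "cj u = 0" "cu (J a) = - cj a" "cj (J a) = cu a"
  "cu (SS a) = 0" "cu (KK a) = 0" "cj (SS a) = 0" "cj (KK a) = 0"
  "cu w = 0" "cj w = 0" "cw u = 0"
  "cw (J a) = - g a (J w)" "cw (SS a) = g a (SS w)" "cw (KK a) = - g a (KK w)"
  by (simp_all add: cu_def cj_def cw_def g_Jl S_cu w_cu g_sym[of u w] S_adj K_adj)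

lemmas nf = g_cu1 g_cu2 g_cj1 g_cw1 g_cw2 gJl gSl gKl c_lin c_vals

lemma S_swap: "g a (SS b) = g b (SS a)" using S_adj[of b a] g_sym[of "SS b" a] by simp
lemma K_swap: "g a (KK b) = - g b (KK a)" using K_adj[of b a] g_sym[of "KK b" a] by simp
lemma J_swap: "g a (J b) = - g b (J a)" using g_Jl[of b a] g_sym[of "J b" a] by simp
lemma JS_swap: "g a (J (SS b)) = - g b (J (SS a))"
proof -
  have "g a (J (SS b)) = - g (SS b) (J a)" by (rule J_swap)
  also have "\<dots> = - g b (SS (J a))" by (simp add: S_adj)
  also have "\<dots> = - g b (J (SS a))" by simp
  finally show ?thesis .
qed
lemma JK_swap: "g a (J (KK b)) = g b (J (KK a))"
proof -
  have "g a (J (KK b)) = - g (KK b) (J a)" by (rule J_swap)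
  also have "\<dots> = g b (KK (J a))" by (simp add: K_adj)
  also have "\<dots> = g b (J (KK a))" by simp
  finally show ?thesis .
qed

definition nbG :: "'v \<Rightarrow> 'v \<Rightarrow> 'v" where
  "nbG x y = (2 * g x u) *\<^sub>R KK y
    + (2 * g x (J u)) *\<^sub>R ((2 * g y u * lam) *\<^sub>R J u - (2 * g y (J u) * lam) *\<^sub>R u + SS (J y))
    + (2 * g y u) *\<^sub>R (- (2 * g w x) *\<^sub>R J u - SS x)
    + (2 * g y (J u)) *\<^sub>R ((2 * g w x) *\<^sub>R u - J (SS x))
    + (2 * g (SS x) y) *\<^sub>R u + (2 * g (J (SS x)) y) *\<^sub>R J u"

lemma nbG_J: "nbG x (J y) = J (nbG x y)"
  by (rule vec_eqI) (simp add: nbG_def nf; simp add: algebra_simps)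

lemma nbG_metric: "g (nbG x y) z + g y (nbG x z) = 0"
  apply (subst g_sym[of y])
  apply (simp add: nbG_def nf JS_swap[of z y] K_swap[of z y])
  apply (simp add: algebra_simps)
  done

lemma nbG_tors: "g (torsion br nbG x y) z = - g (torsion br nbG x z) y"
  apply (simp add: torsion_def br_formula Dg_SK nbG_def nf S_swap[of y x] S_swap[of z x] S_swap[of z y]
     K_swap[of z y] K_swap[of y x] K_swap[of z x] JS_swap[of z y] JS_swap[of y x] JS_swap[of z x])
  apply (simp only: ring_distribs)
  apply algebra
  done

end
context aa begin

lemma nbG_addl: "nbG (a + b) y = nbG a y + nbG b y"
  by (rule vec_eqI) (simp add: nbG_def nf; algebra)
lemma nbG_addr: "nbG x (a + b) = nbG x a + nbG x b"
  by (rule vec_eqI) (simp add: nbG_def nf; algebra)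
lemma nbG_scalel: "nbG (r *\<^sub>R a) y = r *\<^sub>R nbG a y"
  by (rule vec_eqI) (simp add: nbG_def nf; algebra)
lemma nbG_scaler: "nbG x (r *\<^sub>R a) = r *\<^sub>R nbG x a"
  by (rule vec_eqI) (simp add: nbG_def nf; algebra)

lemma nbG_bil: "bilinear nbG"
  unfolding bilinear_def
  by (auto intro!: linearI simp: nbG_addl nbG_addr nbG_scalel nbG_scaler)

lemma nbG_bismut: "is_bismut_conn br J g nbG"
  unfolding is_bismut_conn_def using nbG_bil nbG_J nbG_metric nbG_tors by blast

lemma bismut_eq: "bismut br J g = nbG"
  unfolding bismut_def
proof (rule the_equality)
  show "is_bismut_conn br J g nbG" by (rule nbG_bismut)
  show "nb = nbG" if "is_bismut_conn br J g nb" for nb using bismut_unique[OF that nbG_bismut] .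
qed

end

context aa begin

definition Tor :: "'v \<Rightarrow> 'v \<Rightarrow> 'v" where "Tor x y = nbG x y - nbG y x - br x y"
definition bexp :: "'v \<Rightarrow> 'v \<Rightarrow> 'v \<Rightarrow> 'v" where
  "bexp x y z = nbG x (Tor y z) - Tor (nbG x y) z - Tor y (nbG x z)"

lemma BTP_iff: "BTP br J g \<longleftrightarrow> (\<forall>x y z. bexp x y z = 0)"
  unfolding BTP_def bismut_eq Let_def bexp_def Tor_def torsion_def by simp

definition condR where "condR \<longleftrightarrow> (\<forall>y. SS y = 0) \<and> KK w = 0"

lemma condR_BTP: assumes S0: "\<And>y. SS y = 0" and K0: "KK w = 0" shows "bexp x y z = 0"
  apply (rule vec_eqI)
  apply (simp add: bexp_def Tor_def br_formula Dg_SK nbG_def nf S0 K0)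
  apply algebra
  done

lemma btp_wit1: assumes p: "p \<in> N1" and h: "g (bexp p u (J u)) (J p) = 0" shows "g p (SS (SS p)) = 0"
  using p h by (simp add: bexp_def Tor_def br_formula Dg_SK nbG_def nf N1_def)

lemma btp_wit2: assumes S0: "\<And>y. SS y = 0" and h: "g (bexp u u (J u)) t = 0" shows "g t (KK w) = 0"
  using h by (simp add: bexp_def Tor_def br_formula Dg_SK nbG_def nf S0)

lemma SS_pr: "SS y = SS (pr y)" by (simp add: pr_def)

lemma S_zero_from: assumes "\<And>p. p \<in> N1 \<Longrightarrow> g p (SS (SS p)) = 0" shows "SS y = 0"
proof -
  have "g (SS (pr y)) (SS (pr y)) = 0" using assms[OF pr_N1] by (simp add: S_adj)
  then have "SS (pr y) = 0" using g_pos by fastforce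
  then show ?thesis using SS_pr by simp
qed

lemma BTP_condR: "BTP br J g \<longleftrightarrow> condR"
proof
  assume b: "BTP br J g"
  then have B: "bexp x y z = 0" for x y z using BTP_iff by blast
  have S0: "SS y = 0" for y
    by (rule S_zero_from) (rule btp_wit1, assumption, simp add: B)
  have "g t (KK w) = 0" for t by (rule btp_wit2[OF S0]) (simp add: B)
  then have "KK w = 0" by (intro g_eq0) (simp add: g_sym)
  then show condR unfolding condR_def using S0 by blast
next
  assume condR
  then show "BTP br J g" unfolding BTP_iff condR_def using condR_BTP by blast
qed

end

context aa begin

lemma vec0_frame: assumes "\<And>i. i \<in> {1..n} \<Longrightarrow> g y (xv i) = 0 \<and> g y (J (xv i)) = 0" shows "y = 0"
proof (rule vec_eq0_zeta)
  fix i assume i: "i \<in> {1..n}" then show "zeta i y = 0" using assms[OF i] zeta_formula[OF i] by (simp add: Complex_eq_0)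
qed

lemma re_zeta: "i \<in> {1..n} \<Longrightarrow> g y (xv i) = Re (zeta i y)" and im_zeta: "i \<in> {1..n} \<Longrightarrow> g y (J (xv i)) = Im (zeta i y)"
  using zeta_formula by simp_all

lemma zeta_bru_x: assumes i: "i \<in> {2..n}" and k: "k \<in> {2..n}" shows "zeta i (br u (xv k)) = - cnj (A i k) / 2"
proof -
  have "zeta i (br u (xv k)) = - (\<Sum>j=2..n. cnj (A i j) * zeta j (xv k))" using zeta_bru[OF xv_N1[OF k] i] .
  also have "(\<Sum>j=2..n. cnj (A i j) * zeta j (xv k)) = (\<Sum>j=2..n. if j = k then cnj (A i k) / 2 else 0)"
    by (rule sum.cong) (use k in \<open>auto simp: zeta_x[OF two_in[OF k]] zeta_x\<close>)
  also have "\<dots> = cnj (A i k) / 2" using k by simp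
  finally show ?thesis by simp
qed

lemma g_bru_x: assumes i: "i \<in> {2..n}" and k: "k \<in> {2..n}"
  shows "g (Dg (xv k)) (xv i) = - Re (A i k) / 2" "g (Dg (xv k)) (J (xv i)) = Im (A i k) / 2"
  using zeta_bru_x[OF i k] re_zeta[OF two_in[OF i]] im_zeta[OF two_in[OF i]] Dg_p[OF xv_N1[OF k]] by simp_all

lemma gS_x: assumes i: "i \<in> {2..n}" and k: "k \<in> {2..n}"
  shows "g (SS (xv k)) (xv i) = - (Re (A i k) + Re (A k i)) / 4"
    "g (SS (xv k)) (J (xv i)) = (Im (A i k) - Im (A k i)) / 4"
proof -
  have a: "g (SS a) b = (g (Dg a) b + g (Dg b) a) / 2" for a b by (simp add: SS_def Dt_adj g_sym[of a])
  show "g (SS (xv k)) (xv i) = - (Re (A i k) + Re (A k i)) / 4"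
    using g_bru_x[OF i k] g_bru_x[OF k i] by (simp add: a)
  have "g (Dg (J (xv i))) (xv k) = - Im (A k i) / 2"
    using g_bru_x(2)[OF k i] by (simp add: Dg_J g_Jl J_swap[of "Dg (xv i)"])
  then show "g (SS (xv k)) (J (xv i)) = (Im (A i k) - Im (A k i)) / 4"
    using g_bru_x[OF i k] by (simp add: a)
qed

lemma SS_sum: "SS (sum f I) = (\<Sum>i\<in>I. SS (f i))"
  by (induction I rule: infinite_finite_induct) auto

lemma u_xv1: "xv 1 = u" by (simp add: u_def)
lemma u_xv1'[simp]: "xv (Suc 0) = u" by (simp add: u_def)

lemma SS_from_frame: assumes "\<And>k. k \<in> {2..n} \<Longrightarrow> SS (xv k) = 0" shows "SS y = 0"
proof -
  have "SS y = SS (\<Sum>k\<in>{1..n}. (2 * g y (xv k)) *\<^sub>R xv k + (2 * g y (J (xv k))) *\<^sub>R J (xv k))"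
    using expand[of y] by (rule arg_cong)
  also have "\<dots> = (\<Sum>k\<in>{1..n}. (2 * g y (xv k)) *\<^sub>R SS (xv k) + (2 * g y (J (xv k))) *\<^sub>R J (SS (xv k)))"
    by (simp add: SS_sum)
  also have "\<dots> = 0"
  proof (rule sum.neutral, intro ballI)
    fix k assume "k \<in> {1..n}"
    then have "k = 1 \<or> k \<in> {2..n}" by auto
    then show "(2 * g y (xv k)) *\<^sub>R SS (xv k) + (2 * g y (J (xv k))) *\<^sub>R J (SS (xv k)) = 0"
      using assms by (auto simp: u_xv1)
  qed
  finally show ?thesis .
qed

definition cond1 where "cond1 \<longleftrightarrow> (\<forall>i\<in>{2..n}. \<forall>j\<in>{2..n}. A i j + cnj (A j i) = 0)"
definition cond2 where "cond2 \<longleftrightarrow> (\<forall>i\<in>{2..n}. (\<Sum>j=2..n. A i j * v j) = 0)"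

lemma cond1_iff: "cond1 \<longleftrightarrow> (\<forall>y. SS y = 0)"
proof
  assume c: cond1
  show "\<forall>y. SS y = 0"
  proof (intro allI, rule SS_from_frame)
    fix k assume k: "k \<in> {2..n}"
    show "SS (xv k) = 0"
    proof (rule vec0_frame)
      fix i assume i: "i \<in> {1..n}"
      then have "i = 1 \<or> i \<in> {2..n}" by auto
      then show "g (SS (xv k)) (xv i) = 0 \<and> g (SS (xv k)) (J (xv i)) = 0"
      proof
        assume "i = 1" then show ?thesis by (simp add: u_xv1 S_cu)
      next
        assume i: "i \<in> {2..n}"
        have "A i k + cnj (A k i) = 0" using c i k unfolding cond1_def by blast
        then have "Re (A i k) + Re (A k i) = 0" "Im (A i k) - Im (A k i) = 0" by (simp_all add: complex_eq_iff)
        then show ?thesis using gS_x[OF i k] by simp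
      qed
    qed
  qed
next
  assume S0: "\<forall>y. SS y = 0"
  show cond1 unfolding cond1_def
  proof (intro ballI)
    fix i j assume i: "i \<in> {2..n}" and j: "j \<in> {2..n}"
    have "Re (A i j) + Re (A j i) = 0" "Im (A i j) - Im (A j i) = 0"
      using gS_x[OF i j] S0 by simp_all
    then show "A i j + cnj (A j i) = 0" by (simp add: complex_eq_iff)
  qed
qed

lemma zeta_bru_w: assumes i: "i \<in> {2..n}" shows "zeta i (br u w) = \<i> / 2 * cnj (\<Sum>j=2..n. A i j * v j)"
proof -
  have "zeta i (br u w) = - (\<Sum>j=2..n. cnj (A i j) * zeta j w)" using zeta_bru[OF w_N1 i] .
  also have "\<dots> = - (\<Sum>j=2..n. cnj (A i j) * (- \<i> * cnj (v j) / 2))"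
    by (simp add: zeta_w)
  also have "\<dots> = \<i> / 2 * (\<Sum>j=2..n. cnj (A i j * v j))"
    by (simp add: sum_distrib_left sum_negf algebra_simps)
  finally show ?thesis by simp
qed

lemma cond2_iff: assumes S0: "\<And>y. SS y = 0" shows "cond2 \<longleftrightarrow> KK w = 0"
proof -
  have bw: "br u w = KK w" using bru_SK[OF w_N1] S0 by simp
  show ?thesis
  proof
    assume c: cond2
    show "KK w = 0" unfolding bw[symmetric]
    proof (rule zeta_eq0_all)
      show "z1 (br u w) = 0" using bru_N1[OF w_N1] by (simp add: N1_iff)
      show "zeta i (br u w) = 0" if "i \<in> {2..n}" for i
        using c that unfolding cond2_def by (simp add: zeta_bru_w)
    qed
  next
    assume k: "KK w = 0"
    show cond2 unfolding cond2_def
    proof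
      fix i assume i: "i \<in> {2..n}"
      have "zeta i (br u w) = 0" using k bw zeta_zero[OF two_in[OF i]] by simp
      then have "cnj (\<Sum>j=2..n. A i j * v j) = 0" using zeta_bru_w[OF i] by (simp del: cnj_sum)
      then show "(\<Sum>j=2..n. A i j * v j) = 0" by (simp del: cnj_sum)
    qed
  qed
qed

lemma cond_iff: "(cond1 \<and> cond2) \<longleftrightarrow> condR"
  unfolding condR_def using cond1_iff cond2_iff by blast

end

context aa begin

lemma nbG_diffl: "nbG (a - b) y = nbG a y - nbG b y" and nbG_diffr: "nbG x (a - b) = nbG x a - nbG x b"
  and nbG_negl: "nbG (- a) y = - nbG a y" and nbG_negr: "nbG x (- a) = - nbG x a"
  using nbG_bil by (simp_all add: bilinear_lsub bilinear_rsub bilinear_lneg bilinear_rneg)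

definition Rr :: "'v \<Rightarrow> 'v \<Rightarrow> 'v \<Rightarrow> 'v" where
  "Rr x y z = nbG x (nbG y z) - nbG y (nbG x z) - nbG (br x y) z"

lemma ccurv_exp: "ccurv br nbG (a1, b1) (a2, b2) (a3, b3) =
  (Rr a1 a2 a3 - Rr a1 b2 b3 - Rr b1 a2 b3 - Rr b1 b2 a3, Rr a1 a2 b3 + Rr a1 b2 a3 + Rr b1 a2 a3 - Rr b1 b2 b3)"
  by (simp add: ccurv_def cbil_def Rr_def nbG_addl nbG_addr nbG_diffl nbG_diffr algebra_simps)

lemma Rr_formula: assumes S0: "\<And>y. SS y = 0" and K0: "KK w = 0"
  shows "Rr x y z = (8 * (lam\<^sup>2 + 2 * cw w) * (cu x * cj y - cj x * cu y)) *\<^sub>R (cu z *\<^sub>R J u - cj z *\<^sub>R u)"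
  apply (rule vec_eqI)
  apply (simp add: Rr_def br_formula Dg_SK nbG_def nf S0 K0)
  apply algebra
  done

definition QQ where "QQ a b c d = cmetric g (ccurv br nbG (a, - J a) (b, J b) (c, - J c)) (d, J d)"

lemma L1: assumes p: "p \<in> N1"
  shows "Re (QQ u u p p) - Re (QQ p u u p) + 2 * (Re (QQ u p p u) - Re (QQ p p u u)) = -24 * g p (SS (SS p))"
  using p
  apply (simp add: QQ_def ccurv_exp cmetric_def N1_def Rr_def br_formula Dg_SK nbG_def nf)
  apply (simp add: field_simps)
  done

lemma L2: assumes p: "p \<in> N1"
  shows "Re (QQ u u p u) - Re (QQ p u u u) = 2 * (g p (J (SS w)) + g p (J (KK w)))"
    "Im (QQ u u p u) - Im (QQ p u u u) = - 2 * (g p (SS w) + g p (KK w))"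
  using p
  apply (simp_all add: QQ_def ccurv_exp cmetric_def N1_def Rr_def br_formula Dg_SK nbG_def nf)
  apply (simp_all add: field_simps)
  done

end

context aa begin

lemma BKL_unf: "BKL n br J g e \<longleftrightarrow>
     (\<forall>X\<in>g10 J. \<forall>Y\<in>g10 J. \<forall>Z. ccurv br nbG X Y Z = 0) \<and>
     (\<forall>X\<in>g01 J. \<forall>Y\<in>g01 J. \<forall>Z. ccurv br nbG X Y Z = 0) \<and>
     (\<forall>i\<in>{1..n}. \<forall>j\<in>{1..n}. \<forall>k\<in>{1..n}. \<forall>l\<in>{1..n}.
        cmetric g (ccurv br nbG (e i) (cconj (e j)) (e k)) (cconj (e l))
        = cmetric g (ccurv br nbG (e k) (cconj (e j)) (e i)) (cconj (e l)))"
  unfolding BKL_def bismut_eq Let_def by simp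

lemma N1_c: "p \<in> N1 \<Longrightarrow> cu p = 0" "p \<in> N1 \<Longrightarrow> cj p = 0"
  unfolding N1_def cu_def cj_def by simp_all

lemma pair0: "((a::'v), (b::'v)) = 0 \<longleftrightarrow> a = 0 \<and> b = 0" by (simp add: zero_prod_def)

lemma cl1: assumes S0: "\<And>y. SS y = 0" and K0: "KK w = 0"
  shows "ccurv br nbG (a, - J a) (b, - J b) (c1, c2) = 0"
  unfolding ccurv_exp Rr_formula[OF S0 K0] pair0
  by (intro conjI vec_eqI) (simp_all add: nf algebra_simps)

lemma cl2: assumes S0: "\<And>y. SS y = 0" and K0: "KK w = 0"
  shows "ccurv br nbG (a, J a) (b, J b) (c1, c2) = 0"
  unfolding ccurv_exp Rr_formula[OF S0 K0] pair0
  by (intro conjI vec_eqI) (simp_all add: nf algebra_simps)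

lemma cl3a: assumes S0: "\<And>y. SS y = 0" and K0: "KK w = 0" and p: "p \<in> N1"
  shows "ccurv br nbG (p, - J p) (a2, b2) (a3, b3) = 0"
  unfolding ccurv_exp Rr_formula[OF S0 K0] pair0 using N1_c[OF p] by (simp add: nf)

lemma cl3b: assumes S0: "\<And>y. SS y = 0" and K0: "KK w = 0" and p: "p \<in> N1"
  shows "ccurv br nbG (a1, b1) (a2, b2) (p, - J p) = 0"
  unfolding ccurv_exp Rr_formula[OF S0 K0] pair0 using N1_c[OF p] by (simp add: nf)

lemma cmetric0: "cmetric g 0 z = 0" by (simp add: cmetric_def zero_prod_def Complex_eq_0)

lemma e_in_N1: "k \<in> {2..n} \<Longrightarrow> e k = (xv k, - J (xv k)) \<and> xv k \<in> N1"
  using e_eq[OF two_in] xv_N1 by blast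

lemma condR_BKL: assumes c: condR shows "BKL n br J g e"
proof -
  have S0: "\<And>y. SS y = 0" and K0: "KK w = 0" using c unfolding condR_def by auto
  have A1: "\<forall>X\<in>g10 J. \<forall>Y\<in>g10 J. \<forall>Z. ccurv br nbG X Y Z = 0"
  proof (intro ballI allI)
    fix X Y and Z :: "'v \<times> 'v" assume "X \<in> g10 J" "Y \<in> g10 J"
    then obtain a b where "X = (a, - J a)" "Y = (b, - J b)" unfolding g10_def by blast
    moreover obtain c1 c2 where "Z = (c1, c2)" by (metis surj_pair)
    ultimately show "ccurv br nbG X Y Z = 0" using cl1[OF S0 K0] by simp
  qed
  have A2: "\<forall>X\<in>g01 J. \<forall>Y\<in>g01 J. \<forall>Z. ccurv br nbG X Y Z = 0"
  proof (intro ballI allI)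
    fix X Y and Z :: "'v \<times> 'v" assume "X \<in> g01 J" "Y \<in> g01 J"
    then obtain a b where "X = (a, J a)" "Y = (b, J b)" unfolding g01_def by blast
    moreover obtain c1 c2 where "Z = (c1, c2)" by (metis surj_pair)
    ultimately show "ccurv br nbG X Y Z = 0" using cl2[OF S0 K0] by simp
  qed
  have A3: "cmetric g (ccurv br nbG (e i) (cconj (e j)) (e k)) (cconj (e l))
        = cmetric g (ccurv br nbG (e k) (cconj (e j)) (e i)) (cconj (e l))"
    if i: "i \<in> {1..n}" and j: "j \<in> {1..n}" and k: "k \<in> {1..n}" and l: "l \<in> {1..n}" for i j k l
  proof (cases "i = k")
    case True then show ?thesis by simp
  next
    case False
    then have "i \<in> {2..n} \<or> k \<in> {2..n}" using i k by auto
    then show ?thesis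
    proof
      assume i2: "i \<in> {2..n}"
      obtain a2 b2 where j2: "cconj (e j) = (a2, b2)" by (metis surj_pair)
      obtain a3 b3 where k3: "e k = (a3, b3)" by (metis surj_pair)
      obtain a1 b1 where k1: "e k = (a1, b1)" by (metis surj_pair)
      show ?thesis using e_in_N1[OF i2] cl3a[OF S0 K0, of "xv i" a2 b2 a3 b3] cl3b[OF S0 K0, of "xv i" a1 b1 a2 b2]
        j2 k3 k1 by (simp add: cmetric0)
    next
      assume k2: "k \<in> {2..n}"
      obtain a2 b2 where j2: "cconj (e j) = (a2, b2)" by (metis surj_pair)
      obtain a3 b3 where k3: "e i = (a3, b3)" by (metis surj_pair)
      show ?thesis using e_in_N1[OF k2] cl3a[OF S0 K0, of "xv k" a2 b2 a3 b3] cl3b[OF S0 K0, of "xv k" a3 b3 a2 b2]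
        j2 k3 by (simp add: cmetric0)
    qed
  qed
  show ?thesis unfolding BKL_unf using A1 A2 A3 by blast
qed

lemma e1: "e 1 = (u, - J u)" using e_eq[OF one_in] by simp
lemma e1'[simp]: "e (Suc 0) = (u, - J u)" using e_eq[OF one_in] by simp
lemma ce: "j \<in> {1..n} \<Longrightarrow> cconj (e j) = (xv j, J (xv j))" by (simp add: e_eq cconj_def)
lemma ce1: "cconj (e 1) = (u, J u)" using ce[OF one_in] by simp

lemma BKL_condR: assumes b: "BKL n br J g e" shows condR
proof -
  have B: "\<And>i j k l. i \<in> {1..n} \<Longrightarrow> j \<in> {1..n} \<Longrightarrow> k \<in> {1..n} \<Longrightarrow> l \<in> {1..n} \<Longrightarrow>
        cmetric g (ccurv br nbG (e i) (cconj (e j)) (e k)) (cconj (e l))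
        = cmetric g (ccurv br nbG (e k) (cconj (e j)) (e i)) (cconj (e l))"
  proof -
    fix i j k l assume "i \<in> {1..n}" "j \<in> {1..n}" "k \<in> {1..n}" "l \<in> {1..n}"
    moreover have "\<forall>i\<in>{1..n}. \<forall>j\<in>{1..n}. \<forall>k\<in>{1..n}. \<forall>l\<in>{1..n}.
        cmetric g (ccurv br nbG (e i) (cconj (e j)) (e k)) (cconj (e l))
        = cmetric g (ccurv br nbG (e k) (cconj (e j)) (e i)) (cconj (e l))"
      using b unfolding BKL_unf by (rule conjunct2[THEN conjunct2])
    ultimately show "cmetric g (ccurv br nbG (e i) (cconj (e j)) (e k)) (cconj (e l))
        = cmetric g (ccurv br nbG (e k) (cconj (e j)) (e i)) (cconj (e l))" by blast
  qed
  have Q: "QQ u u p p = QQ p u u p" "QQ u p p u = QQ p p u u" "QQ u u p u = QQ p u u u"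
    if k: "k \<in> {2..n}" and pk: "p = xv k" for k p
  proof -
    have ek: "e k = (p, - J p)" "cconj (e k) = (p, J p)" using e_eq[OF two_in[OF k]] ce[OF two_in[OF k]] pk by auto
    show "QQ u u p p = QQ p u u p" using B[OF one_in one_in two_in[OF k] two_in[OF k]]
      by (simp add: QQ_def ek e1 cconj_def)
    show "QQ u p p u = QQ p p u u" using B[OF one_in two_in[OF k] two_in[OF k] one_in]
      by (simp add: QQ_def ek e1 cconj_def)
    show "QQ u u p u = QQ p u u u" using B[OF one_in one_in two_in[OF k] one_in]
      by (simp add: QQ_def ek e1 cconj_def)
  qed
  have Sk: "SS (xv k) = 0" if k: "k \<in> {2..n}" for k
  proof -
    have "-24 * g (xv k) (SS (SS (xv k))) = 0" using L1[OF xv_N1[OF k]] Q[OF k refl] by simp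
    then have "g (SS (xv k)) (SS (xv k)) = 0" by (simp add: S_adj)
    then show ?thesis using g_pos by fastforce
  qed
  have S0: "SS y = 0" for y by (rule SS_from_frame) (rule Sk)
  have Kk: "g (KK w) (xv k) = 0 \<and> g (KK w) (J (xv k)) = 0" if k: "k \<in> {2..n}" for k
  proof -
    have "2 * (g (xv k) (J (SS w)) + g (xv k) (J (KK w))) = 0" "- 2 * (g (xv k) (SS w) + g (xv k) (KK w)) = 0"
      using L2[OF xv_N1[OF k]] Q[OF k refl] by simp_all
    then have "g (xv k) (J (KK w)) = 0" "g (xv k) (KK w) = 0" using S0 by simp_all
    then show ?thesis using J_swap[of "KK w" "xv k"] g_sym[of "KK w" "xv k"] by simp
  qed
  have K0: "KK w = 0"
  proof (rule vec0_frame)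
    fix i assume i: "i \<in> {1..n}"
    then have "i = 1 \<or> i \<in> {2..n}" by auto
    then show "g (KK w) (xv i) = 0 \<and> g (KK w) (J (xv i)) = 0"
      using Kk by (auto simp: u_xv1 S_cu)
  qed
  show condR unfolding condR_def using S0 K0 by blast
qed

lemma BKL_iff: "BKL n br J g e \<longleftrightarrow> condR" using BKL_condR condR_BKL by blast

end

theorem proposition1:
  fixes br :: "'v::euclidean_space \<Rightarrow> 'v \<Rightarrow> 'v" and J :: "'v \<Rightarrow> 'v" and g :: "'v \<Rightarrow> 'v \<Rightarrow> real"
    and n :: nat and e :: "nat \<Rightarrow> 'v \<times> 'v" and \<phi> :: "nat \<Rightarrow> 'v \<times> 'v \<Rightarrow> complex"
    and lam :: real and v :: "nat \<Rightarrow> complex" and A :: "nat \<Rightarrow> nat \<Rightarrow> complex"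
  assumes "DIM('v) = 2 * n"
    and "hermitian_lie_algebra br J g"
    and "almost_abelian br"
    and "unitary_frame n J g e"
    and "dual_coframe n e \<phi>"
    and "admissible_eqs n br \<phi> lam v A"
  shows "(BTP br J g \<longleftrightarrow> BKL n br J g e) \<and>
         (BKL n br J g e \<longleftrightarrow>
            ((\<forall>i\<in>{2..n}. \<forall>j\<in>{2..n}. A i j + cnj (A j i) = 0) \<and>
             (\<forall>i\<in>{2..n}. (\<Sum>j=2..n. A i j * v j) = 0)))"
proof -
  interpret aa br J g n e \<phi> lam v A
    by unfold_locales (use assms in simp_all)
  show ?thesis using BTP_condR BKL_iff cond_iff unfolding cond1_def cond2_def by blast
qed

end
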